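(* Let $k\ge 0$. (a) If $u\in\mathcal P_k^\perp(K)$ satisfies $u|_e=0$ on some face $e\in\mathcal E(K)$, then $u=0$. (b) If $\mathbf q\in\boldsymbol{\mathcal P}_k^\perp(K)$ satisfies $\mathbf q\cdot\mathbf n=0$ on $\partial K$, then $\mathbf q=\mathbf 0$.
   Context: $K\subset\mathbb R^d$ ($d\in\{2,3\}$) is a nondegenerate triangle/tetrahedron with outward unit normal $\mathbf n$ and set of faces (edges if $d=2$) $\mathcal E(K)$. $\mathcal P_k(K)$ denotes polynomials of total degree at most $k$ on $K$, with $\mathcal P_{-1}(K)=\{0\}$. $(\cdot,\cdot)_K$ is the $L^2(K)$ inner product. $\mathcal P_k^\perp(K)=\{u\in\mathcal P_k(K):(u,v)_K=0\ \forall v\in\mathcal P_{k-1}(K)\}$ and $\boldsymbol{\mathcal P}_k^\perp(K)=\mathcal P_k^\perp(K)^d$. *)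

theory Defs
  imports "HOL-Analysis.Analysis"
begin

definition poly_le :: "nat \<Rightarrow> (real^'n \<Rightarrow> real) \<Rightarrow> bool" where
  "poly_le k f \<longleftrightarrow>
     (\<exists>A c. finite A \<and> (\<forall>\<alpha>\<in>A. (\<Sum>i\<in>UNIV. \<alpha> i) \<le> k) \<and>
        (\<forall>x. f x = (\<Sum>\<alpha>\<in>A. c \<alpha> * (\<Prod>i\<in>UNIV. (x $ i) ^ (\<alpha> i)))))"

definition L2_inner :: "(real^'n) set \<Rightarrow> (real^'n \<Rightarrow> real) \<Rightarrow> (real^'n \<Rightarrow> real) \<Rightarrow> real" where
  "L2_inner K u v = integral K (\<lambda>x. u x * v x)"

text \<open>P_k^perp(K): elements of P_k orthogonal in L2(K) to P_{k-1}, with P_{-1} = {0}.\<close>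
definition poly_perp :: "(real^'n) set \<Rightarrow> nat \<Rightarrow> (real^'n \<Rightarrow> real) \<Rightarrow> bool" where
  "poly_perp K k u \<longleftrightarrow> poly_le k u \<and>
     (k = 0 \<or> (\<forall>v. poly_le (k - 1) v \<longrightarrow> L2_inner K u v = 0))"

definition simplex_faces :: "(real^'n) set \<Rightarrow> (real^'n) set set" where
  "simplex_faces V = {convex hull (V - {v}) | v. v \<in> V}"

definition outward_normal :: "(real^'n) set \<Rightarrow> (real^'n) set \<Rightarrow> real^'n \<Rightarrow> bool" where
  "outward_normal K e n \<longleftrightarrow> norm n = 1 \<and>
     (\<forall>x\<in>e. \<forall>y\<in>e. n \<bullet> (x - y) = 0) \<and>
     (\<forall>x\<in>e. \<forall>y\<in>K. n \<bullet> (y - x) \<le> 0)"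

end

theory Submission
  imports Defs "HOL-Analysis.Analysis"
begin


lemma poly_le_mono: "poly_le a f \<Longrightarrow> a \<le> b \<Longrightarrow> poly_le b f"
  unfolding poly_le_def by (meson order_trans)

lemma poly_le_const: "poly_le k (\<lambda>x. c)"
  unfolding poly_le_def
  by (rule exI[of _ "{\<lambda>i. 0}"], rule exI[of _ "\<lambda>_. c"]) simp

lemma poly_le_coord: "poly_le 1 (\<lambda>x::real^'n. x $ j)"
  unfolding poly_le_def
proof (rule exI[of _ "{\<lambda>i. if i = j then 1 else 0}"], rule exI[of _ "\<lambda>_. 1"], intro conjI allI)
  fix x :: "real^'n"
  have "(\<Prod>i\<in>UNIV. (x $ i) ^ (if i = j then 1 else 0)) = (\<Prod>i\<in>UNIV. if i = j then x $ i else 1)"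
    by (rule prod.cong) auto
  also have "\<dots> = x $ j" by (simp add: prod.delta)
  finally show "x $ j = (\<Sum>\<alpha>\<in>{\<lambda>i. if i = j then 1 else 0}. 1 * (\<Prod>i\<in>UNIV. (x $ i) ^ \<alpha> i))" by simp
qed auto

lemma poly_le_add:
  assumes "poly_le k f" "poly_le k g" shows "poly_le k (\<lambda>x. f x + g x)"
proof -
  obtain A c where A: "finite A" "\<forall>\<alpha>\<in>A. (\<Sum>i\<in>UNIV. \<alpha> i) \<le> k"
    "\<forall>x. f x = (\<Sum>\<alpha>\<in>A. c \<alpha> * (\<Prod>i\<in>UNIV. (x $ i) ^ (\<alpha> i)))"
    using assms(1) unfolding poly_le_def by blast
  obtain B d where B: "finite B" "\<forall>\<alpha>\<in>B. (\<Sum>i\<in>UNIV. \<alpha> i) \<le> k"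
    "\<forall>x. g x = (\<Sum>\<alpha>\<in>B. d \<alpha> * (\<Prod>i\<in>UNIV. (x $ i) ^ (\<alpha> i)))"
    using assms(2) unfolding poly_le_def by blast
  let ?e = "\<lambda>\<alpha>. (if \<alpha> \<in> A then c \<alpha> else 0) + (if \<alpha> \<in> B then d \<alpha> else 0)"
  show ?thesis unfolding poly_le_def
  proof (rule exI[of _ "A \<union> B"], rule exI[of _ ?e], intro conjI allI)
    fix x :: "real^'a"
    let ?m = "\<lambda>\<alpha>. (\<Prod>i\<in>UNIV. (x $ i) ^ (\<alpha> i))"
    have "(\<Sum>\<alpha>\<in>A \<union> B. ?e \<alpha> * ?m \<alpha>) = (\<Sum>\<alpha>\<in>A \<union> B. (if \<alpha> \<in> A then c \<alpha> * ?m \<alpha> else 0)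
       + (if \<alpha> \<in> B then d \<alpha> * ?m \<alpha> else 0))"
      by (rule sum.cong) (auto simp: algebra_simps)
    also have "\<dots> = f x + g x"
      using A B by (simp add: sum.distrib sum.If_cases Int_absorb1 Int_absorb2)
    finally show "f x + g x = (\<Sum>\<alpha>\<in>A \<union> B. ?e \<alpha> * ?m \<alpha>)" by simp
  qed (use A B in auto)
qed

lemma poly_le_mult:
  assumes "poly_le a f" "poly_le b g" shows "poly_le (a + b) (\<lambda>x. f x * g x)"
proof -
  obtain A c where A: "finite A" "\<forall>\<alpha>\<in>A. (\<Sum>i\<in>UNIV. \<alpha> i) \<le> a"
    "\<forall>x. f x = (\<Sum>\<alpha>\<in>A. c \<alpha> * (\<Prod>i\<in>UNIV. (x $ i) ^ (\<alpha> i)))"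
    using assms(1) unfolding poly_le_def by blast
  obtain B d where B: "finite B" "\<forall>\<alpha>\<in>B. (\<Sum>i\<in>UNIV. \<alpha> i) \<le> b"
    "\<forall>x. g x = (\<Sum>\<alpha>\<in>B. d \<alpha> * (\<Prod>i\<in>UNIV. (x $ i) ^ (\<alpha> i)))"
    using assms(2) unfolding poly_le_def by blast
  define h where "h = (\<lambda>p::('a\<Rightarrow>nat)\<times>('a\<Rightarrow>nat). \<lambda>i. fst p i + snd p i)"
  define e where "e = (\<lambda>\<gamma>. \<Sum>p\<in>{p\<in>A\<times>B. h p = \<gamma>}. c (fst p) * d (snd p))"
  show ?thesis unfolding poly_le_def
  proof (rule exI[of _ "h ` (A \<times> B)"], rule exI[of _ e], intro conjI allI ballI)
    show "finite (h ` (A \<times> B))" using A B by simp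
  next
    fix \<gamma> assume "\<gamma> \<in> h ` (A \<times> B)"
    then obtain \<alpha> \<beta> where "\<alpha> \<in> A" "\<beta> \<in> B" "\<gamma> = h (\<alpha>, \<beta>)" by auto
    then show "(\<Sum>i\<in>UNIV. \<gamma> i) \<le> a + b" using A B by (simp add: h_def sum.distrib add_mono)
  next
    fix x :: "real^'a"
    let ?m = "\<lambda>\<alpha>. (\<Prod>i\<in>UNIV. (x $ i) ^ (\<alpha> i))"
    have mm: "?m \<alpha> * ?m \<beta> = ?m (h (\<alpha>, \<beta>))" for \<alpha> \<beta>
      by (simp add: h_def power_add prod.distrib)
    have "f x * g x = (\<Sum>\<alpha>\<in>A. \<Sum>\<beta>\<in>B. (c \<alpha> * ?m \<alpha>) * (d \<beta> * ?m \<beta>))"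
      using A B by (simp add: sum_product)
    also have "\<dots> = (\<Sum>p\<in>A\<times>B. c (fst p) * d (snd p) * ?m (h p))"
      by (simp add: sum.cartesian_product case_prod_beta h_def power_add prod.distrib mult_ac)
    also have "\<dots> = (\<Sum>\<gamma>\<in>h ` (A\<times>B). \<Sum>p\<in>{p\<in>A\<times>B. h p = \<gamma>}. c (fst p) * d (snd p) * ?m (h p))"
      using A B by (intro sum.image_gen[of "A\<times>B" "\<lambda>p. c (fst p) * d (snd p) * ?m (h p)" h]) simp
    also have "\<dots> = (\<Sum>\<gamma>\<in>h ` (A\<times>B). e \<gamma> * ?m \<gamma>)"
      unfolding e_def sum_distrib_right by (intro sum.cong refl) auto
    finally show "f x * g x = (\<Sum>\<gamma>\<in>h ` (A\<times>B). e \<gamma> * ?m \<gamma>)" .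
  qed
qed

lemma poly_le_sum:
  assumes "finite S" "\<And>s. s \<in> S \<Longrightarrow> poly_le k (f s)"
  shows "poly_le k (\<lambda>x. \<Sum>s\<in>S. f s x)"
  using assms by (induction S rule: finite_induct) (auto intro: poly_le_add poly_le_const)

lemma poly_le_prod:
  assumes "finite S" "\<And>s. s \<in> S \<Longrightarrow> poly_le (d s) (f s)"
  shows "poly_le (\<Sum>s\<in>S. d s) (\<lambda>x. \<Prod>s\<in>S. f s x)"
  using assms by (induction S rule: finite_induct) (auto intro: poly_le_mult poly_le_const)

lemma poly_le_power:
  assumes "poly_le a f" shows "poly_le (a * n) (\<lambda>x. f x ^ n)"
  using poly_le_prod[of "{..<n}" "\<lambda>_. a" "\<lambda>_. f"] assms by (simp add: mult.commute)

lemma poly_le_scale: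
  assumes "poly_le k f" shows "poly_le k (\<lambda>x. c * f x)"
  using poly_le_mult[OF poly_le_const[of 0 c] assms] by simp

lemma poly_le_compose:
  fixes g :: "real^'m \<Rightarrow> real^'n"
  assumes "poly_le k f" "\<And>i. poly_le 1 (\<lambda>x. g x $ i)"
  shows "poly_le k (\<lambda>x. f (g x))"
proof -
  obtain A c where A: "finite A" "\<forall>\<alpha>\<in>A. (\<Sum>i\<in>UNIV. \<alpha> i) \<le> k"
    "\<forall>x. f x = (\<Sum>\<alpha>\<in>A. c \<alpha> * (\<Prod>i\<in>UNIV. (x $ i) ^ (\<alpha> i)))"
    using assms(1) unfolding poly_le_def by blast
  have "poly_le k (\<lambda>x. \<Sum>\<alpha>\<in>A. c \<alpha> * (\<Prod>i\<in>UNIV. (g x $ i) ^ (\<alpha> i)))"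
  proof (rule poly_le_sum[OF A(1)])
    fix \<alpha> assume "\<alpha> \<in> A"
    have "poly_le (\<Sum>i\<in>UNIV. \<alpha> i) (\<lambda>x. \<Prod>i\<in>UNIV. (g x $ i) ^ (\<alpha> i))"
      by (rule poly_le_prod) (use poly_le_power[OF assms(2)] in \<open>force+\<close>)
    then show "poly_le k (\<lambda>x. c \<alpha> * (\<Prod>i\<in>UNIV. (g x $ i) ^ (\<alpha> i)))"
      using A(2) \<open>\<alpha> \<in> A\<close> by (auto intro: poly_le_scale poly_le_mono)
  qed
  then show ?thesis using A(3) by simp
qed


lemma poly_le_affine: "poly_le 1 (\<lambda>x::real^'n. (\<Sum>j\<in>UNIV. a j * x $ j) + b)"
proof (rule poly_le_add)
  show "poly_le 1 (\<lambda>x::real^'n. \<Sum>j\<in>UNIV. a j * x $ j)"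
    by (intro poly_le_sum poly_le_scale poly_le_coord) auto
  show "poly_le 1 (\<lambda>x::real^'n. b)" by (rule poly_le_const)
qed

lemma poly_le_cont:
  assumes "poly_le k f" shows "continuous_on S f"
proof -
  obtain A c where A: "\<forall>x. f x = (\<Sum>\<alpha>\<in>A. c \<alpha> * (\<Prod>i\<in>UNIV. (x $ i) ^ (\<alpha> i)))"
    using assms unfolding poly_le_def by blast
  have "f = (\<lambda>x. \<Sum>\<alpha>\<in>A. c \<alpha> * (\<Prod>i\<in>UNIV. (x $ i) ^ (\<alpha> i)))" using A by auto
  moreover have "continuous_on S (\<lambda>x::real^'a. \<Sum>\<alpha>\<in>A. c \<alpha> * (\<Prod>i\<in>UNIV. (x $ i) ^ (\<alpha> i)))"
    by (intro continuous_on_sum continuous_on_mult continuous_on_const continuous_on_prod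
        continuous_on_power continuous_on_component continuous_on_id)
  ultimately show ?thesis by simp
qed


lemma poly_le_monomial: "poly_le (\<Sum>i\<in>UNIV. \<beta> i) (\<lambda>x::real^'n. \<Prod>i\<in>UNIV. (x $ i) ^ (\<beta> i))"
  by (rule poly_le_prod) (use poly_le_power[OF poly_le_coord] in force)+

lemma mono_split:
  fixes y :: "real^'n"
  shows "(\<Prod>i\<in>UNIV. (y $ i) ^ (\<alpha> i)) = y $ i0 ^ \<alpha> i0 * (\<Prod>i\<in>UNIV-{i0}. (y $ i) ^ (\<alpha> i))"
  by (simp add: prod.remove)

lemma poly_le_split:
  fixes P :: "real^'n \<Rightarrow> real"
  assumes "poly_le k P"
  shows "\<exists>W. poly_le (k-1) W \<and> (k = 0 \<longrightarrow> (\<forall>y. W y = 0)) \<and>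
     (\<forall>y. P y - P (\<chi> j. if j = i0 then 0 else y$j) = y$i0 * W y)"
proof -
  obtain A c where A: "finite A" "\<forall>\<alpha>\<in>A. (\<Sum>i\<in>UNIV. \<alpha> i) \<le> k"
    "\<forall>x. P x = (\<Sum>\<alpha>\<in>A. c \<alpha> * (\<Prod>i\<in>UNIV. (x $ i) ^ (\<alpha> i)))"
    using assms unfolding poly_le_def by blast
  define A1 where "A1 = {\<alpha>\<in>A. \<alpha> i0 \<noteq> 0}"
  define dec where "dec = (\<lambda>\<alpha>::'n\<Rightarrow>nat. \<alpha>(i0 := \<alpha> i0 - 1))"
  let ?m = "\<lambda>\<alpha> (y::real^'n). \<Prod>i\<in>UNIV. (y $ i) ^ (\<alpha> i)"
  define W where "W = (\<lambda>y. \<Sum>\<alpha>\<in>A1. c \<alpha> * ?m (dec \<alpha>) y)"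
  have fA1: "finite A1" using A(1) by (simp add: A1_def)
  have sdec: "(\<Sum>i\<in>UNIV. dec \<alpha> i) + 1 = (\<Sum>i\<in>UNIV. \<alpha> i)" if "\<alpha> i0 \<noteq> 0" for \<alpha>
  proof -
    have "(\<Sum>i\<in>UNIV. dec \<alpha> i) = dec \<alpha> i0 + (\<Sum>i\<in>UNIV-{i0}. dec \<alpha> i)"
      by (simp add: sum.remove)
    also have "(\<Sum>i\<in>UNIV-{i0}. dec \<alpha> i) = (\<Sum>i\<in>UNIV-{i0}. \<alpha> i)"
      by (rule sum.cong) (auto simp: dec_def)
    finally show ?thesis using that by (simp add: dec_def sum.remove[of UNIV i0 \<alpha>])
  qed
  have "poly_le (k-1) W" unfolding W_def
  proof (rule poly_le_sum[OF fA1])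
    fix \<alpha> assume "\<alpha> \<in> A1"
    then have "(\<Sum>i\<in>UNIV. dec \<alpha> i) \<le> k - 1" using sdec[of \<alpha>] A(2) by (auto simp: A1_def)
    then show "poly_le (k - 1) (\<lambda>y. c \<alpha> * ?m (dec \<alpha>) y)"
      by (intro poly_le_scale poly_le_mono[OF poly_le_monomial])
  qed
  moreover have "k = 0 \<longrightarrow> (\<forall>y. W y = 0)"
  proof
    assume "k = 0"
    have "A1 = {}"
    proof (rule ccontr)
      assume "A1 \<noteq> {}" then obtain \<alpha> where "\<alpha> \<in> A1" by auto
      then have "\<alpha> i0 \<le> (\<Sum>i\<in>UNIV. \<alpha> i)" by (intro member_le_sum) auto
      with \<open>\<alpha> \<in> A1\<close> A(2) \<open>k = 0\<close> show False by (auto simp: A1_def)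
    qed
    then show "\<forall>y. W y = 0" by (simp add: W_def)
  qed
  moreover have "P y - P (\<chi> j. if j = i0 then 0 else y$j) = y$i0 * W y" for y
  proof -
    let ?y' = "(\<chi> j. if j = i0 then 0 else y$j) :: real^'n"
    have rest: "(\<Prod>i\<in>UNIV-{i0}. (?y' $ i) ^ (\<beta> i)) = (\<Prod>i\<in>UNIV-{i0}. (y $ i) ^ (\<beta> i))" for \<beta>
      by (rule prod.cong) auto
    have tm: "c \<alpha> * ?m \<alpha> y - c \<alpha> * ?m \<alpha> ?y' = (if \<alpha> \<in> A1 then y$i0 * (c \<alpha> * ?m (dec \<alpha>) y) else 0)"
      if "\<alpha> \<in> A" for \<alpha>
    proof (cases "\<alpha> i0 = 0")
      case True
      then show ?thesis using rest[of \<alpha>] unfolding mono_split[of _ _ i0] by (simp add: A1_def)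
    next
      case False
      then obtain n where n: "\<alpha> i0 = Suc n" using not0_implies_Suc by blast
      have r2: "(\<Prod>i\<in>UNIV-{i0}. (y $ i) ^ (dec \<alpha> i)) = (\<Prod>i\<in>UNIV-{i0}. (y $ i) ^ (\<alpha> i))"
        by (rule prod.cong) (auto simp: dec_def)
      show ?thesis using that False n r2 unfolding mono_split[of _ _ i0]
        by (simp add: A1_def dec_def)
    qed
    have "P y - P ?y' = (\<Sum>\<alpha>\<in>A. c \<alpha> * ?m \<alpha> y - c \<alpha> * ?m \<alpha> ?y')"
      using A(3) by (simp add: sum_subtractf)
    also have "\<dots> = (\<Sum>\<alpha>\<in>A. if \<alpha> \<in> A1 then y$i0 * (c \<alpha> * ?m (dec \<alpha>) y) else 0)"
      using tm by (rule sum.cong[OF refl])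
    also have "\<dots> = (\<Sum>\<alpha>\<in>A1. y$i0 * (c \<alpha> * ?m (dec \<alpha>) y))"
      using A(1) by (simp add: sum.If_cases A1_def Int_def)
    also have "\<dots> = y$i0 * W y" by (simp add: W_def sum_distrib_left)
    finally show ?thesis .
  qed
  ultimately show ?thesis by blast
qed




lemma cont_integrable_compact:
  fixes f :: "'a::euclidean_space \<Rightarrow> real"
  assumes "compact S" "continuous_on S f" shows "f integrable_on S"
proof -
  have "integrable lborel (\<lambda>x. indicator S x *\<^sub>R f x)"
    by (rule borel_integrable_compact[OF assms])
  then have "(\<lambda>x. indicator S x *\<^sub>R f x) integrable_on UNIV" by (rule integrable_on_lborel)
  moreover have "(\<lambda>x. indicator S x *\<^sub>R f x) = (\<lambda>x. if x \<in> S then f x else 0)"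
    by (auto simp: indicator_def)
  ultimately show ?thesis using integrable_restrict_UNIV by metis
qed

lemma zero_integral_interior:
  fixes f :: "'a::euclidean_space \<Rightarrow> real"
  assumes "compact K" "continuous_on UNIV f" "\<And>x. x \<in> K \<Longrightarrow> 0 \<le> f x"
    "integral K f = 0" "x \<in> interior K"
  shows "f x = 0"
proof -
  obtain a b where ab: "cbox a b \<subseteq> interior K" "x \<in> box a b" "\<forall>i\<in>Basis. a \<bullet> i < b \<bullet> i"
    using open_contains_cbox[OF open_interior assms(5)] by blast
  have sub: "cbox a b \<subseteq> K" using ab(1) interior_subset by blast
  have ic: "f integrable_on cbox a b"
    by (rule integrable_continuous) (rule continuous_on_subset[OF assms(2)], simp)
  have iK: "f integrable_on K"
    by (rule cont_integrable_compact[OF assms(1)]) (rule continuous_on_subset[OF assms(2)], simp)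
  have "integral (cbox a b) f \<le> integral K f"
    by (rule integral_subset_le[OF sub ic iK]) (use assms(3) in auto)
  moreover have "0 \<le> integral (cbox a b) f"
    by (rule integral_nonneg[OF ic]) (use assms(3) sub in auto)
  ultimately have "integral (cbox a b) f = 0" using assms(4) by simp
  then have "(f has_integral 0) (cbox a b)" using ic by (metis has_integral_integral)
  moreover have "x \<in> cbox a b" using ab(2) box_subset_cbox by blast
  moreover have "box a b \<noteq> {}" using ab(2) by blast
  moreover have "\<And>y. y \<in> box a b \<Longrightarrow> 0 \<le> f y" using assms(3) sub box_subset_cbox by blast
  moreover have "continuous_on (cbox a b) f" by (rule continuous_on_subset[OF assms(2)]) simp
  ultimately show "f x = 0" using has_integral_0_cbox_imp_0 by blast
qed




locale sx =
  fixes V :: "(real^'n) set" and w :: "real^'n" and g :: "'n \<Rightarrow> real^'n"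
  assumes fin: "finite V" and indep: "\<not> affine_dependent V" and wV: "w \<in> V"
    and gb: "bij_betw g UNIV (V - {w})"
begin

definition M :: "real^'n^'n" where "M = (\<chi> r c. (g c - w) $ r)"

lemma g_in: "g i \<in> V" "g i \<noteq> w" using gb by (auto simp: bij_betw_def)

lemma g_inj: "g i = g j \<longleftrightarrow> i = j" using gb by (auto simp: bij_betw_def inj_on_def)

lemma sumV: "(\<Sum>v\<in>V. f v) = f w + (\<Sum>i\<in>UNIV. f (g i))"
proof -
  have "(\<Sum>v\<in>V. f v) = f w + (\<Sum>v\<in>V-{w}. f v)" using fin wV by (simp add: sum.remove)
  also have "(\<Sum>v\<in>V-{w}. f v) = (\<Sum>i\<in>UNIV. f (g i))"
    using sum.reindex_bij_betw[OF gb, of f] by simp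
  finally show ?thesis .
qed

lemma Mv: "M *v y = (\<Sum>c\<in>UNIV. y $ c *\<^sub>R (g c - w))"
  by (simp add: M_def matrix_vector_mult_def vec_eq_iff sum_component mult.commute)

lemma comb:
  assumes "sum c V = 1"
  shows "(\<Sum>v\<in>V. c v *\<^sub>R v) = w + M *v (\<chi> i. c (g i))"
proof -
  have s: "c w + (\<Sum>i\<in>UNIV. c (g i)) = 1" using assms sumV[of c] by simp
  have "M *v (\<chi> i. c (g i)) = (\<Sum>i\<in>UNIV. c (g i) *\<^sub>R g i) - (\<Sum>i\<in>UNIV. c (g i)) *\<^sub>R w"
    by (simp add: Mv scaleR_diff_right sum_subtractf scaleR_sum_left)
  moreover have "c w *\<^sub>R w + S = w + (S - s2 *\<^sub>R w)" if "c w + s2 = 1" for S s2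
  proof -
    have "c w = 1 - s2" using that by simp
    then show ?thesis by (simp add: scaleR_diff_left)
  qed
  ultimately show ?thesis using sumV[of "\<lambda>v. c v *\<^sub>R v"] s by simp
qed

lemma injM: "inj ((*v) M)"
proof -
  have "y = 0" if "M *v y = 0" for y
  proof (rule ccontr)
    assume "y \<noteq> 0"
    then obtain i where i: "y $ i \<noteq> 0" by (auto simp: vec_eq_iff)
    define U where "U = (\<lambda>v. if v = w then - (\<Sum>j\<in>UNIV. y $ j) else y $ (inv_into UNIV g v))"
    have Ug: "U (g j) = y $ j" for j
      using g_in[of j] gb by (simp add: U_def bij_betw_def inv_into_f_f)
    have "sum U V = 0" using sumV[of U] unfolding Ug by (simp add: U_def)
    moreover have "\<exists>v\<in>V. U v \<noteq> 0" using g_in[of i] Ug[of i] i by (intro bexI[of _ "g i"]) auto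
    moreover have "(\<Sum>v\<in>V. U v *\<^sub>R v) = 0"
    proof -
      have "(\<Sum>v\<in>V. U v *\<^sub>R v) = U w *\<^sub>R w + (\<Sum>j\<in>UNIV. y $ j *\<^sub>R g j)"
        using sumV[of "\<lambda>v. U v *\<^sub>R v"] by (simp add: Ug)
      also have "\<dots> = M *v y"
        by (simp add: Mv U_def scaleR_diff_right sum_subtractf scaleR_sum_left)
      finally show ?thesis using that by simp
    qed
    ultimately have "affine_dependent V" using affine_dependent_explicit_finite[OF fin] by blast
    with indep show False by simp
  qed
  then show ?thesis unfolding inj_on_def
    by (metis (no_types, lifting) diff_self eq_iff_diff_eq_0 matrix_vector_mult_diff_distrib)
qed

definition B :: "real^'n^'n" where "B = (SOME B. B ** M = mat 1)"

lemma BM: "B ** M = mat 1"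
proof -
  have "\<exists>B. B ** M = mat 1" using injM by (simp add: matrix_left_invertible_injective)
  then show ?thesis unfolding B_def by (rule someI_ex)
qed

lemma MB: "M ** B = mat 1" by (rule matrix_left_right_inverse1[OF BM])

lemma BMv: "B *v (M *v y) = y" by (simp add: matrix_vector_mul_assoc BM matrix_vector_mul_lid)
lemma MBv: "M *v (B *v y) = y" by (simp add: matrix_vector_mul_assoc MB matrix_vector_mul_lid)

definition lam :: "real^'n \<Rightarrow> real^'n" where "lam x = B *v (x - w)"

lemma lam_comb:
  assumes "sum c V = 1"
  shows "lam (\<Sum>v\<in>V. c v *\<^sub>R v) = (\<chi> i. c (g i))"
proof -
  have "lam (\<Sum>v\<in>V. c v *\<^sub>R v) = B *v (M *v (\<chi> i. c (g i)))"
    by (simp only: lam_def comb[OF assms] add_diff_cancel_left')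
  then show ?thesis by (simp only: BMv)
qed

lemma lam_poly: "poly_le 1 (\<lambda>x. lam x $ i)"
proof -
  have e: "(\<lambda>x. lam x $ i) = (\<lambda>x. (\<Sum>j\<in>UNIV. B$i$j * x $ j) + (- (\<Sum>j\<in>UNIV. B$i$j * w $ j)))"
    by (simp add: lam_def matrix_vector_mult_def algebra_simps sum_subtractf)
  show ?thesis unfolding e by (rule poly_le_affine)
qed

lemma T_poly: "poly_le 1 (\<lambda>y. (w + M *v y) $ i)"
proof -
  have e: "(\<lambda>y. (w + M *v y) $ i) = (\<lambda>y. (\<Sum>j\<in>UNIV. M$i$j * y $ j) + w $ i)"
    by (simp add: matrix_vector_mult_def algebra_simps)
  show ?thesis unfolding e by (rule poly_le_affine)
qed

lemma lam_T: "lam (w + M *v y) = y" by (simp only: lam_def add_diff_cancel_left' BMv)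
lemma T_lam: "w + M *v lam x = x" by (simp only: lam_def MBv add_diff_cancel_left' diff_add_cancel add.commute[of w])

lemma hullV: "x \<in> convex hull V \<longleftrightarrow> (\<exists>c. (\<forall>v\<in>V. 0 \<le> c v) \<and> sum c V = 1 \<and> (\<Sum>v\<in>V. c v *\<^sub>R v) = x)"
  using convex_hull_finite[OF fin] by blast

lemma lam_nonneg:
  assumes "x \<in> convex hull V" shows "0 \<le> lam x $ i"
proof -
  obtain c where c: "\<forall>v\<in>V. 0 \<le> c v" "sum c V = 1" "(\<Sum>v\<in>V. c v *\<^sub>R v) = x"
    using assms hullV by blast
  have "lam x = (\<chi> i. c (g i))" using lam_comb[OF c(2)] c(3) by simp
  then show ?thesis using c(1) g_in(1)[of i] by simp
qed

lemma cardV: "card V = CARD('n) + 1"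
  using sumV[of "\<lambda>_. 1::nat"] fin by simp

lemma ncard: "\<not> card V \<le> DIM(real^'n)" using cardV by simp

lemma int_eq: "interior (convex hull V) =
   {y. \<exists>u. (\<forall>x\<in>V. 0 < u x \<and> u x < 1) \<and> sum u V = 1 \<and> (\<Sum>x\<in>V. u x *\<^sub>R x) = y}"
  by (simp only: interior_convex_hull_explicit[OF indep] if_not_P[OF ncard])

lemma interior_ne: "interior (convex hull V) \<noteq> {}"
proof -
  define c where "c = (\<lambda>v::real^'n. 1 / real (card V))"
  have gt: "real (card V) > 1" using cardV by simp
  have A: "\<forall>x\<in>V. 0 < c x \<and> c x < 1" using gt by (simp add: c_def)
  have B: "sum c V = 1" using gt by (simp add: c_def)
  have "(\<Sum>v\<in>V. c v *\<^sub>R v) \<in> interior (convex hull V)"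
    unfolding int_eq mem_Collect_eq by (rule exI[of _ c], intro conjI A B refl)
  then show ?thesis by blast
qed

lemma lam_pos:
  assumes "x \<in> interior (convex hull V)" shows "0 < lam x $ i"
proof -
  obtain c where c: "\<forall>v\<in>V. 0 < c v \<and> c v < 1" "sum c V = 1" "(\<Sum>v\<in>V. c v *\<^sub>R v) = x"
    using assms unfolding int_eq by blast
  have "lam x = (\<chi> i. c (g i))" using lam_comb[OF c(2)] c(3) by simp
  then show ?thesis using c(1) g_in(1)[of i] by simp
qed

end



context sx begin

lemma partA:
  assumes perp: "poly_perp (convex hull V) k u"
    and zero: "\<forall>x \<in> convex hull (V - {g i0}). u x = 0"
  shows "\<forall>x\<in>convex hull V. u x = 0"
proof -
  let ?K = "convex hull V"
  have pu: "poly_le k u" using perp poly_perp_def by blast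
  define U where "U = (\<lambda>y. u (w + M *v y))"
  have pU: "poly_le k U" unfolding U_def by (rule poly_le_compose[OF pu T_poly])
  obtain W where W: "poly_le (k-1) W" "k = 0 \<longrightarrow> (\<forall>y. W y = 0)"
    "\<forall>y. U y - U (\<chi> j. if j = i0 then 0 else y$j) = y$i0 * W y"
    using poly_le_split[OF pU, of i0] by blast
  have gi0: "g i0 \<in> V" "g i0 \<noteq> w" using g_in by auto
  have key: "u x = lam x $ i0 * W (lam x)" if x: "x \<in> ?K" for x
  proof -
    obtain c where c: "\<forall>v\<in>V. 0 \<le> c v" "sum c V = 1" "(\<Sum>v\<in>V. c v *\<^sub>R v) = x"
      using x hullV by blast
    define y where "y = lam x"
    have "lam x = (\<chi> i. c (g i))" using lam_comb[OF c(2)] by (simp only: c(3))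
    then have y: "y = (\<chi> i. c (g i))" by (simp only: y_def)
    define y' where "y' = ((\<chi> j. if j = i0 then 0 else y$j) :: real^'n)"
    define d where "d = (\<lambda>v. if v = w then c w + c (g i0) else if v = g i0 then 0 else c v)"
    have dgi: "d (g i) = (if i = i0 then 0 else c (g i))" for i
      using g_in(2)[of i] g_inj[of i i0] by (simp add: d_def)
    have dg: "(\<chi> i. d (g i)) = y'"
      unfolding vec_eq_iff y'_def y by (simp add: dgi)
    have e1: "(\<Sum>i\<in>UNIV. d (g i)) = (\<Sum>i\<in>UNIV-{i0}. c (g i))"
    proof -
      have "(\<Sum>i\<in>UNIV. d (g i)) = d (g i0) + (\<Sum>i\<in>UNIV-{i0}. d (g i))" by (simp add: sum.remove)
      also have "(\<Sum>i\<in>UNIV-{i0}. d (g i)) = (\<Sum>i\<in>UNIV-{i0}. c (g i))"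
        by (rule sum.cong) (simp_all add: dgi)
      finally show ?thesis using gi0 by (simp add: d_def)
    qed
    have e2: "(\<Sum>i\<in>UNIV. c (g i)) = c (g i0) + (\<Sum>i\<in>UNIV-{i0}. c (g i))" by (simp add: sum.remove)
    have sd: "sum d V = 1"
      using sumV[of d] sumV[of c] c(2) e1 e2 by (simp add: d_def)
    have dgi0: "d (g i0) = 0" using gi0 by (simp add: d_def)
    have d0: "\<forall>v\<in>V. 0 \<le> d v" using c(1) wV gi0 by (auto simp: d_def)
    have fin': "finite (V - {g i0})" using fin by simp
    have "w + M *v y' = (\<Sum>v\<in>V. d v *\<^sub>R v)" using comb[OF sd] dg by simp
    also have "\<dots> = (\<Sum>v\<in>V - {g i0}. d v *\<^sub>R v)"
      using fin gi0 dgi0 by (simp add: sum.remove)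
    finally have xe1: "w + M *v y' = (\<Sum>v\<in>V - {g i0}. d v *\<^sub>R v)" .
    have sd': "sum d (V - {g i0}) = 1" using sd fin gi0 dgi0 by (simp add: sum.remove)
    have "w + M *v y' \<in> convex hull (V - {g i0})"
      unfolding convex_hull_finite[OF fin'] mem_Collect_eq
      by (rule exI[of _ d]) (use d0 sd' xe1 in auto)
    then have "U y' = 0" using zero by (simp add: U_def)
    moreover have "U y = u x" by (simp add: U_def y_def T_lam)
    ultimately show ?thesis using W(3) y_def y'_def by (metis diff_zero)
  qed
  show ?thesis
  proof (cases "k = 0")
    case True then show ?thesis using key W(2) by simp
  next
    case False
    define wt where "wt = (\<lambda>x. W (lam x))"
    have pw: "poly_le (k-1) wt" unfolding wt_def by (rule poly_le_compose[OF W(1) lam_poly])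
    have "L2_inner ?K u wt = 0" using perp False pw unfolding poly_perp_def by blast
    then have "integral ?K (\<lambda>x. u x * wt x) = 0" by (simp add: L2_inner_def)
    moreover have "integral ?K (\<lambda>x. u x * wt x) = integral ?K (\<lambda>x. lam x $ i0 * (wt x * wt x))"
      by (rule integral_cong) (simp add: key wt_def)
    ultimately have I: "integral ?K (\<lambda>x. lam x $ i0 * (wt x * wt x)) = 0" by simp
    have cK: "compact ?K" by (rule compact_convex_hull[OF finite_imp_compact[OF fin]])
    have contF: "continuous_on UNIV (\<lambda>x. lam x $ i0 * (wt x * wt x))"
      by (rule poly_le_cont[OF poly_le_mult[OF lam_poly poly_le_mult[OF pw pw]]])
    have nn: "\<And>x. x \<in> ?K \<Longrightarrow> 0 \<le> lam x $ i0 * (wt x * wt x)"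
      using lam_nonneg by simp
    have wi: "wt x = 0" if "x \<in> interior ?K" for x
    proof -
      have "lam x $ i0 * (wt x * wt x) = 0"
        by (rule zero_integral_interior[OF cK contF nn I that])
      moreover have "0 < lam x $ i0" using lam_pos that by blast
      ultimately show ?thesis by simp
    qed
    have clo: "closure (interior ?K) = ?K"
      using convex_closure_interior[OF convex_convex_hull interior_ne]
        closure_convex_hull[OF finite_imp_compact[OF fin]] by simp
    have "wt x = 0" if "x \<in> ?K" for x
    proof (rule continuous_constant_on_closure[of "interior ?K" wt])
      show "continuous_on (closure (interior ?K)) wt" by (rule poly_le_cont[OF pw])
      show "x \<in> closure (interior ?K)" using that clo by simp
    qed (rule wi)
    then show ?thesis using key wt_def by simp
  qed
qed

end



context sx begin

lemma Bv_comp: "(B *v z) $ i = B $ i \<bullet> z"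
  by (simp add: matrix_vector_mult_def inner_vec_def)

lemma lam_inner: "lam x $ i = B $ i \<bullet> (x - w)"
  by (simp add: lam_def Bv_comp)

lemma row_nz: "B $ i \<noteq> 0"
proof
  assume z: "B $ i = 0"
  have "(B ** M) $ i $ i = 1" by (simp add: BM mat_def)
  moreover have "(B ** M) $ i $ i = 0" using z by (simp add: matrix_matrix_mult_def)
  ultimately show False by simp
qed

lemma face_lam0:
  assumes "x \<in> convex hull (V - {g i})" shows "lam x $ i = 0"
proof -
  have fin': "finite (V - {g i})" using fin by simp
  obtain c where c: "\<forall>v\<in>V - {g i}. 0 \<le> c v" "sum c (V - {g i}) = 1" "(\<Sum>v\<in>V - {g i}. c v *\<^sub>R v) = x"
    using assms unfolding convex_hull_finite[OF fin'] by blast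
  define c' where "c' = (\<lambda>v. if v = g i then 0 else c v)"
  have gi: "g i \<in> V" using g_in by simp
  have s1: "sum c' V = 1"
  proof -
    have "sum c' V = c' (g i) + sum c' (V - {g i})" using fin gi by (simp add: sum.remove)
    also have "sum c' (V - {g i}) = sum c (V - {g i})" by (rule sum.cong) (simp_all add: c'_def)
    finally show ?thesis using c(2) by (simp add: c'_def)
  qed
  have s2: "(\<Sum>v\<in>V. c' v *\<^sub>R v) = x"
  proof -
    have "(\<Sum>v\<in>V. c' v *\<^sub>R v) = c' (g i) *\<^sub>R g i + (\<Sum>v\<in>V - {g i}. c' v *\<^sub>R v)"
      using fin gi by (simp add: sum.remove)
    also have "(\<Sum>v\<in>V - {g i}. c' v *\<^sub>R v) = (\<Sum>v\<in>V - {g i}. c v *\<^sub>R v)"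
      by (rule sum.cong) (simp_all add: c'_def)
    finally show ?thesis using c(3) by (simp add: c'_def)
  qed
  have "lam x = (\<chi> j. c' (g j))" using lam_comb[OF s1] by (simp only: s2)
  then show ?thesis by (simp add: c'_def)
qed

lemma outward:
  "outward_normal (convex hull V) (convex hull (V - {g i})) (-(1 / norm (B $ i)) *\<^sub>R B $ i)"
proof -
  let ?r = "B $ i"
  have nz: "norm ?r \<noteq> 0" using row_nz by simp
  have dif: "?r \<bullet> (x - y) = lam x $ i - lam y $ i" for x y
    by (simp add: lam_inner inner_diff_right)
  have sub: "convex hull (V - {g i}) \<subseteq> convex hull V" by (rule hull_mono) blast
  show ?thesis unfolding outward_normal_def
  proof (intro conjI ballI)
    show "norm (-(1 / norm ?r) *\<^sub>R ?r) = 1" using nz by simp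
  next
    fix x y assume "x \<in> convex hull (V - {g i})" "y \<in> convex hull (V - {g i})"
    then show "(-(1 / norm ?r) *\<^sub>R ?r) \<bullet> (x - y) = 0"
      using face_lam0 dif[of x y] by (simp add: inner_scaleR_left)
  next
    fix x y assume x: "x \<in> convex hull (V - {g i})" and y: "y \<in> convex hull V"
    have "0 \<le> lam y $ i" using lam_nonneg[OF y] .
    then show "(-(1 / norm ?r) *\<^sub>R ?r) \<bullet> (y - x) \<le> 0"
      using face_lam0[OF x] dif[of y x] nz by (simp add: inner_scaleR_left)
  qed
qed

lemma partB:
  assumes qp: "\<forall>i. poly_perp (convex hull V) k (\<lambda>x. q x $ i)"
    and qn: "\<forall>e\<in>simplex_faces V. \<forall>n. outward_normal (convex hull V) e n \<longrightarrow> (\<forall>x\<in>e. q x \<bullet> n = 0)"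
  shows "\<forall>x\<in>convex hull V. q x = 0"
proof -
  let ?K = "convex hull V"
  have cK: "compact ?K" by (rule compact_convex_hull[OF finite_imp_compact[OF fin]])
  have pq: "poly_le k (\<lambda>x. q x $ j)" for j using qp poly_perp_def by blast
  have ui: "\<forall>x\<in>?K. q x \<bullet> B $ i = 0" for i
  proof -
    let ?e = "convex hull (V - {g i})"
    let ?r = "B $ i"
    have nz: "norm ?r \<noteq> 0" using row_nz by simp
    have eF: "?e \<in> simplex_faces V" unfolding simplex_faces_def using g_in by blast
    have z: "\<forall>x\<in>?e. q x \<bullet> ?r = 0"
    proof
      fix x assume "x \<in> ?e"
      then have "q x \<bullet> (-(1 / norm ?r) *\<^sub>R ?r) = 0" using qn eF outward by blast
      then show "q x \<bullet> ?r = 0" using nz by (simp add: inner_scaleR_right)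
    qed
    have eq: "(\<lambda>x. q x \<bullet> ?r) = (\<lambda>x. \<Sum>j\<in>UNIV. ?r $ j * q x $ j)"
      by (simp add: inner_vec_def mult.commute)
    have pl: "poly_le k (\<lambda>x. \<Sum>j\<in>UNIV. ?r $ j * q x $ j)"
      by (intro poly_le_sum poly_le_scale pq) simp
    have orth: "L2_inner ?K (\<lambda>x. \<Sum>j\<in>UNIV. ?r $ j * q x $ j) v = 0"
      if k: "k \<noteq> 0" and v: "poly_le (k - 1) v" for v
    proof -
      have int: "(\<lambda>x. ?r $ j * (q x $ j * v x)) integrable_on ?K" for j
        by (rule cont_integrable_compact[OF cK poly_le_cont[OF poly_le_scale[OF poly_le_mult[OF pq v]]]])
      have "integral ?K (\<lambda>x. (\<Sum>j\<in>UNIV. ?r $ j * q x $ j) * v x)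
          = integral ?K (\<lambda>x. \<Sum>j\<in>UNIV. ?r $ j * (q x $ j * v x))"
        by (simp add: sum_distrib_right mult.assoc)
      also have "\<dots> = (\<Sum>j\<in>UNIV. integral ?K (\<lambda>x. ?r $ j * (q x $ j * v x)))"
        by (rule integral_sum) (simp_all add: int)
      also have "\<dots> = (\<Sum>j\<in>UNIV. ?r $ j * integral ?K (\<lambda>x. q x $ j * v x))"
        by simp
      also have "\<dots> = 0"
        using qp k v unfolding poly_perp_def L2_inner_def by simp
      finally show ?thesis unfolding L2_inner_def .
    qed
    have "poly_perp ?K k (\<lambda>x. q x \<bullet> ?r)"
      unfolding eq poly_perp_def using pl orth by blast
    then show ?thesis using partA z by blast
  qed
  show ?thesis
  proof
    fix x assume x: "x \<in> ?K"
    have "B *v q x = 0" unfolding vec_eq_iff using ui x by (simp add: Bv_comp inner_commute)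
    then have "M *v (B *v q x) = 0" by simp
    then show "q x = 0" by (simp only: MBv)
  qed
qed

end

theorem lemma2p1:
  fixes V :: "(real^'n) set" and k :: nat
  assumes dim: "CARD('n) = 2 \<or> CARD('n) = 3"
    and card: "card V = CARD('n) + 1"
    and indep: "\<not> affine_dependent V"
  shows "(\<forall>u e. poly_perp (convex hull V) k u \<and> e \<in> simplex_faces V \<and> (\<forall>x\<in>e. u x = 0)
            \<longrightarrow> (\<forall>x\<in>convex hull V. u x = 0))
       \<and> (\<forall>q :: real^'n \<Rightarrow> real^'n.
            (\<forall>i. poly_perp (convex hull V) k (\<lambda>x. q x $ i)) \<and>
            (\<forall>e\<in>simplex_faces V. \<forall>n. outward_normal (convex hull V) e n \<longrightarrow> (\<forall>x\<in>e. q x \<bullet> n = 0))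
            \<longrightarrow> (\<forall>x\<in>convex hull V. q x = 0))"
proof -
  have fin: "finite V" using card by (intro card_ge_0_finite) simp
  have gbij: "\<exists>g::'n \<Rightarrow> real^'n. bij_betw g UNIV (V - {w})" if "w \<in> V" for w
  proof -
    have "card (V - {w}) = CARD('n)" using card that fin by simp
    then show ?thesis using finite_same_card_bij[of "UNIV::'n set" "V - {w}"] fin by simp
  qed
  have A: "\<forall>x\<in>convex hull V. u x = 0"
    if u: "poly_perp (convex hull V) k u" and e: "e \<in> simplex_faces V" and z: "\<forall>x\<in>e. u x = 0" for u e
  proof -
    obtain v where v: "v \<in> V" "e = convex hull (V - {v})" using e unfolding simplex_faces_def by blast
    have "card (V - {v}) = CARD('n)" using card v fin by simp
    then have "V - {v} \<noteq> {}"
    proof (intro notI)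
      assume "card (V - {v}) = CARD('n)" "V - {v} = {}"
      then have "CARD('n) = 0" by simp
      then show False by simp
    qed
    then obtain w where w: "w \<in> V" "w \<noteq> v" by blast
    obtain g :: "'n \<Rightarrow> real^'n" where g: "bij_betw g UNIV (V - {w})" using gbij[OF w(1)] by blast
    interpret sx V w g using fin indep w(1) g by unfold_locales
    have "v \<in> g ` UNIV" using g v w unfolding bij_betw_def by blast
    then obtain i0 where "v = g i0" by blast
    then show ?thesis using partA[OF u, of i0] z v(2) by blast
  qed
  have B: "\<forall>x\<in>convex hull V. q x = 0"
    if "\<forall>i. poly_perp (convex hull V) k (\<lambda>x. q x $ i)"
      "\<forall>e\<in>simplex_faces V. \<forall>n. outward_normal (convex hull V) e n \<longrightarrow> (\<forall>x\<in>e. q x \<bullet> n = 0)"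
    for q :: "real^'n \<Rightarrow> real^'n"
  proof -
    have "V \<noteq> {}" using card by auto
    then obtain w where w: "w \<in> V" by blast
    obtain g :: "'n \<Rightarrow> real^'n" where g: "bij_betw g UNIV (V - {w})" using gbij[OF w] by blast
    interpret sx V w g using fin indep w g by unfold_locales
    show ?thesis using partB[OF that] .
  qed
  show ?thesis using A B by blast
qed


end
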